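(* Let $\mathfrak p\in\mathbb R[x,y,z]$ be a polynomial of total degree at most $3$ and let $\mathcal V(\nabla\mathfrak p)=\{u\in\mathbb R^3:\nabla\mathfrak p(u)=0\}$. Let $m\in\mathcal V(\nabla\mathfrak p)$ be a local extremum of $\mathfrak p$ and let $\mathcal C\subset\mathcal V(\nabla\mathfrak p)$ be a path-connected component containing $m$. Then $\mathrm{aff}(\mathcal C)\subset\mathcal V(\nabla\mathfrak p)$.
   Context: $\mathrm{aff}$ denotes affine hull. *)

theory Defs
  imports "HOL-Analysis.Analysis"
begin

definition is_poly3_deg_le3 :: "(real^3 \<Rightarrow> real) \<Rightarrow> bool" where
  "is_poly3_deg_le3 p \<longleftrightarrow>
     (\<exists>c :: nat \<Rightarrow> nat \<Rightarrow> nat \<Rightarrow> real. \<forall>u.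
        p u = (\<Sum>(i,j,k)\<in>{(i,j,k). i + j + k \<le> 3}.
                 c i j k * (u$1)^i * (u$2)^j * (u$3)^k))"

definition grad_zero_set :: "(real^3 \<Rightarrow> real) \<Rightarrow> (real^3) set" where
  "grad_zero_set p = {u. (p has_derivative (\<lambda>h. 0)) (at u)}"

definition local_extremum :: "(real^3 \<Rightarrow> real) \<Rightarrow> real^3 \<Rightarrow> bool" where
  "local_extremum p m \<longleftrightarrow>
     (\<exists>e>0. (\<forall>v\<in>ball m e. p v \<le> p m) \<or> (\<forall>v\<in>ball m e. p m \<le> p v))"

end

theory Submission
  imports Defs
begin
definition lin :: "(3 \<Rightarrow> real) \<Rightarrow> real^3 \<Rightarrow> real" where
  "lin g x = (\<Sum>i\<in>UNIV. g i * x$i)"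
definition bil :: "(3 \<Rightarrow> 3 \<Rightarrow> real) \<Rightarrow> real^3 \<Rightarrow> real^3 \<Rightarrow> real" where
  "bil a x y = (\<Sum>i\<in>UNIV. \<Sum>j\<in>UNIV. a i j * x$i * y$j)"
definition tril :: "(3 \<Rightarrow> 3 \<Rightarrow> 3 \<Rightarrow> real) \<Rightarrow> real^3 \<Rightarrow> real^3 \<Rightarrow> real^3 \<Rightarrow> real" where
  "tril b x y z = (\<Sum>i\<in>UNIV. \<Sum>j\<in>UNIV. \<Sum>k\<in>UNIV. b i j k * x$i * y$j * z$k)"
definition symA :: "(3 \<Rightarrow> 3 \<Rightarrow> real) \<Rightarrow> bool" where
  "symA a \<longleftrightarrow> (\<forall>i j. a i j = a j i)"
definition symB :: "(3 \<Rightarrow> 3 \<Rightarrow> 3 \<Rightarrow> real) \<Rightarrow> bool" where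
  "symB b \<longleftrightarrow> (\<forall>i j k. b i j k = b j i k \<and> b i j k = b i k j)"

lemma lin_add: "lin g (x + y) = lin g x + lin g y"
  by (simp add: lin_def algebra_simps sum.distrib)
lemma lin_scale: "lin g (t *\<^sub>R x) = t * lin g x"
  by (simp add: lin_def algebra_simps sum_distrib_left)
lemma bil_add1: "bil a (x + y) z = bil a x z + bil a y z"
  by (simp add: bil_def algebra_simps sum.distrib)
lemma bil_add2: "bil a z (x + y) = bil a z x + bil a z y"
  by (simp add: bil_def algebra_simps sum.distrib)
lemma bil_scale1: "bil a (t *\<^sub>R x) y = t * bil a x y"
  by (simp add: bil_def algebra_simps sum_distrib_left)
lemma bil_scale2: "bil a x (t *\<^sub>R y) = t * bil a x y"
  by (simp add: bil_def algebra_simps sum_distrib_left)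
lemma bil_sym: "symA a \<Longrightarrow> bil a x y = bil a y x"
  unfolding bil_def symA_def
  apply (subst sum.swap) by (simp add: algebra_simps)
lemma tril_add1: "tril b (x + y) z w = tril b x z w + tril b y z w"
  by (simp add: tril_def algebra_simps sum.distrib)
lemma tril_add2: "tril b z (x + y) w = tril b z x w + tril b z y w"
  by (simp add: tril_def algebra_simps sum.distrib)
lemma tril_add3: "tril b z w (x + y) = tril b z w x + tril b z w y"
  by (simp add: tril_def algebra_simps sum.distrib)
lemma tril_scale1: "tril b (t *\<^sub>R x) y z = t * tril b x y z"
  by (simp add: tril_def algebra_simps sum_distrib_left)
lemma tril_scale2: "tril b x (t *\<^sub>R y) z = t * tril b x y z"
  by (simp add: tril_def algebra_simps sum_distrib_left)
lemma tril_scale3: "tril b x y (t *\<^sub>R z) = t * tril b x y z"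
  by (simp add: tril_def algebra_simps sum_distrib_left)
lemma tril_sym12:
  assumes "symB b" shows "tril b x y z = tril b y x z"
proof -
  have h: "b i j k = b j i k" for i j k using assms unfolding symB_def by blast
  show ?thesis unfolding tril_def sum_3 by (simp add: h algebra_simps)
qed
lemma tril_sym23:
  assumes "symB b" shows "tril b x y z = tril b x z y"
proof -
  have h: "b i j k = b i k j" for i j k using assms unfolding symB_def by blast
  show ?thesis unfolding tril_def sum_3 by (simp add: h algebra_simps)
qed

lemma if_mult0: "(if P then c else (0::real)) * y = (if P then c * y else 0)" by simp

lemma t1: "lin (\<lambda>i. if i = l then c else 0) x = c * x$l"
  by (simp add: lin_def if_mult0)
lemma t2: "bil (\<lambda>i j. if j = l then g i else 0) x x = lin g x * x$l"
  by (simp add: bil_def lin_def sum_distrib_right if_mult0)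
lemma t3: "tril (\<lambda>i j k. if k = l then a i j else 0) x x x = bil a x x * x$l"
  by (simp add: tril_def bil_def sum_distrib_right if_mult0)

definition rep :: "nat \<Rightarrow> (real^3 \<Rightarrow> real) \<Rightarrow> bool" where
  "rep d q \<longleftrightarrow> (\<exists>c g a b. (d = 0 \<longrightarrow> g = (\<lambda>_. 0)) \<and> (d \<le> 1 \<longrightarrow> a = (\<lambda>_ _. 0))
     \<and> (d \<le> 2 \<longrightarrow> b = (\<lambda>_ _ _. 0)) \<and> (\<forall>x. q x = c + lin g x + bil a x x + tril b x x x))"

lemma lin0[simp]: "lin (\<lambda>_. 0) x = 0" by (simp add: lin_def)
lemma bil0[simp]: "bil (\<lambda>_ _. 0) x y = 0" by (simp add: bil_def)
lemma tril0[simp]: "tril (\<lambda>_ _ _. 0) x y z = 0" by (simp add: tril_def)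

lemma rep_const: "rep 0 (\<lambda>x. c)"
  unfolding rep_def by (rule exI[of _ c], rule exI[of _ "\<lambda>_. 0"], rule exI[of _ "\<lambda>_ _. 0"],
     rule exI[of _ "\<lambda>_ _ _. 0"]) simp

lemma rep_mult:
  assumes "rep d q" "d \<le> 2"
  shows "rep (Suc d) (\<lambda>x. q x * x$l)"
proof -
  obtain c g a b where h: "d = 0 \<longrightarrow> g = (\<lambda>_. 0)" "d \<le> 1 \<longrightarrow> a = (\<lambda>_ _. 0)"
     "b = (\<lambda>_ _ _. 0)" "\<forall>x. q x = c + lin g x + bil a x x + tril b x x x"
    using assms unfolding rep_def by auto
  show ?thesis unfolding rep_def
  proof (intro exI conjI allI impI)
    fix x
    show "q x * x$l = 0 + lin (\<lambda>i. if i = l then c else 0) x + bil (\<lambda>i j. if j = l then g i else 0) x x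
       + tril (\<lambda>i j k. if k = l then a i j else 0) x x x"
      unfolding t1 t2 t3 using h by (simp add: algebra_simps)
  next
    assume "Suc d \<le> 1" then show "(\<lambda>i j. if j = l then g i else 0) = (\<lambda>_ _. 0)" using h by auto
  next
    assume "Suc d \<le> 2" then show "(\<lambda>i j k. if k = l then a i j else 0) = (\<lambda>_ _ _. 0)" using h by auto
  qed simp
qed

lemma rep_pow:
  assumes "rep d q" "d + n \<le> 3"
  shows "rep (d + n) (\<lambda>x. q x * (x$l)^n)"
  using assms(2)
proof (induction n)
  case 0 then show ?case using assms(1) by simp
next
  case (Suc n)
  then have "rep (d + n) (\<lambda>x. q x * (x$l)^n)" by simp
  from rep_mult[OF this, of l] Suc.prems show ?case by (simp add: algebra_simps)
qed

lemma rep_mono: "rep d q \<Longrightarrow> d \<le> 3 \<Longrightarrow> rep 3 q"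
  unfolding rep_def by auto

lemma rep3_add: "rep 3 q \<Longrightarrow> rep 3 r \<Longrightarrow> rep 3 (\<lambda>x. q x + r x)"
proof -
  assume q: "rep 3 q" and r: "rep 3 r"
  obtain c g a b where
    "\<forall>x. q x = c + lin g x + bil a x x + tril b x x x"
    using q unfolding rep_def by blast
  moreover obtain c' g' a' b' where
    "\<forall>x. r x = c' + lin g' x + bil a' x x + tril b' x x x"
    using r unfolding rep_def by blast
  ultimately show ?thesis unfolding rep_def
    by (intro exI[of _ "c + c'"] exI[of _ "\<lambda>i. g i + g' i"] exI[of _ "\<lambda>i j. a i j + a' i j"]
       exI[of _ "\<lambda>i j k. b i j k + b' i j k"])
      (simp add: lin_def bil_def tril_def algebra_simps sum.distrib)
qed

lemma rep3_scale: "rep 3 q \<Longrightarrow> rep 3 (\<lambda>x. t * q x)"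
proof -
  assume "rep 3 q"
  then obtain c g a b where
    "\<forall>x. q x = c + lin g x + bil a x x + tril b x x x"
    unfolding rep_def by auto
  then show ?thesis unfolding rep_def
    by (intro exI[of _ "t * c"] exI[of _ "\<lambda>i. t * g i"] exI[of _ "\<lambda>i j. t * a i j"]
       exI[of _ "\<lambda>i j k. t * b i j k"])
      (simp add: lin_def bil_def tril_def algebra_simps sum_distrib_left)
qed

lemma rep3_sum: "finite I \<Longrightarrow> (\<And>i. i \<in> I \<Longrightarrow> rep 3 (f i)) \<Longrightarrow> rep 3 (\<lambda>x. \<Sum>i\<in>I. f i x)"
proof (induction I rule: finite_induct)
  case empty then show ?case using rep_mono[OF rep_const[of 0]] by simp
next
  case (insert i I) then show ?case using rep3_add[of "f i" "\<lambda>x. \<Sum>i\<in>I. f i x"] by simp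
qed

lemma rep_mono3: "i + j + k \<le> 3 \<Longrightarrow> rep 3 (\<lambda>x::real^3. (x$1)^i * (x$2)^j * (x$3)^k)"
proof -
  assume h: "i + j + k \<le> 3"
  have "rep (0 + i) (\<lambda>x. 1 * (x$1)^i)" using h by (intro rep_pow[OF rep_const]) simp
  then have "rep (0 + i + j) (\<lambda>x. (1 * (x$1)^i) * (x$2)^j)" using h by (intro rep_pow[where q="\<lambda>x. 1 * (x$1)^i"]) simp_all
  then have "rep (0 + i + j + k) (\<lambda>x. ((1 * (x$1)^i) * (x$2)^j) * (x$3)^k)" using h by (intro rep_pow[where q="\<lambda>x. (1 * (x$1)^i) * (x$2)^j"]) simp_all
  then show ?thesis using h by (intro rep_mono) auto
qed

lemma poly_rep: "is_poly3_deg_le3 p \<Longrightarrow> rep 3 p"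
proof -
  assume "is_poly3_deg_le3 p"
  then obtain c :: "nat \<Rightarrow> nat \<Rightarrow> nat \<Rightarrow> real" where hc: "\<forall>u. p u = (\<Sum>(i,j,k)\<in>{(i,j,k). i + j + k \<le> 3}.
                 c i j k * (u$1)^i * (u$2)^j * (u$3)^k)"
    unfolding is_poly3_deg_le3_def by blast
  have fin: "finite {(i,j,k). i + j + k \<le> (3::nat)}"
    by (rule finite_subset[of _ "{..3} \<times> {..3} \<times> {..3}"]) auto
  have "rep 3 (\<lambda>u. \<Sum>(i,j,k)\<in>{(i,j,k). i + j + k \<le> 3}. c i j k * (u$1)^i * (u$2)^j * (u$3)^k)"
    apply (rule rep3_sum[OF fin])
    apply clarsimp
    using rep3_scale[OF rep_mono3] by (simp add: mult.assoc)
  moreover have "p = (\<lambda>u. \<Sum>(i,j,k)\<in>{(i,j,k). i + j + k \<le> 3}. c i j k * (u$1)^i * (u$2)^j * (u$3)^k)"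
    using hc by auto
  ultimately show ?thesis by simp
qed

lemma vnth_deriv: "((\<lambda>x::real^3. x$i) has_derivative (\<lambda>h. h$i)) F"
  by (rule bounded_linear_imp_has_derivative[OF bounded_linear_vec_nth])

lemma deriv_form0:
  "((\<lambda>u. c + lin g u + bil a u u + tril b u u u) has_derivative
    (\<lambda>h. lin g h + (bil a h u + bil a u h) + (tril b h u u + tril b u h u + tril b u u h))) (at u)"
  unfolding lin_def bil_def tril_def
  apply (rule derivative_eq_intros vnth_deriv refl | simp)+
  apply (simp add: algebra_simps sum.distrib)
  done

lemma deriv_form:
  assumes "symA a" "symB b"
  shows "((\<lambda>u. c + lin g u + bil a u u + tril b u u u) has_derivative
    (\<lambda>h. lin g h + 2 * bil a u h + 3 * tril b u u h)) (at u)"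
proof -
  have eq: "(\<lambda>h. lin g h + (bil a h u + bil a u h) + (tril b h u u + tril b u h u + tril b u u h))
     = (\<lambda>h. lin g h + 2 * bil a u h + 3 * tril b u u h)"
  proof
    fix h
    have e1: "bil a h u = bil a u h" using bil_sym[OF assms(1)] by blast
    have e3: "tril b u h u = tril b u u h" using tril_sym23[OF assms(2)] by blast
    have e2: "tril b h u u = tril b u u h" using tril_sym12[OF assms(2)] e3 by metis
    show "lin g h + (bil a h u + bil a u h) + (tril b h u u + tril b u h u + tril b u u h) =
       lin g h + 2 * bil a u h + 3 * tril b u u h" unfolding e1 e2 e3 by simp
  qed
  show ?thesis using deriv_form0[of c g a b u] unfolding eq .
qed

lemma bil_zero1[simp]: "bil a 0 y = 0" by (simp add: bil_def)
lemma bil_zero2[simp]: "bil a x 0 = 0" by (simp add: bil_def)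
lemma tril_zero1[simp]: "tril b 0 y z = 0" by (simp add: tril_def)

lemma homog2: "bil a (t *\<^sub>R x) (t *\<^sub>R x) = t^2 * bil a x x"
  by (simp add: bil_scale1 bil_scale2 power2_eq_square)
lemma homog3: "tril b (t *\<^sub>R x) (t *\<^sub>R x) (t *\<^sub>R x) = t^3 * tril b x x x"
  by (simp add: tril_scale1 tril_scale2 tril_scale3 power3_eq_cube)

lemma deriv_f:
  assumes "symA a" "symB b"
  shows "((\<lambda>u. bil a u u + tril b u u u) has_derivative (\<lambda>h. 2 * bil a u h + 3 * tril b u u h)) (at u)"
  using deriv_form[OF assms, of 0 "\<lambda>_. 0" u] by simp

lemma P1:
  assumes e: "e > 0" and mn: "\<forall>u\<in>ball 0 e. 0 \<le> bil a u u + tril b u u u"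
  shows "0 \<le> bil a v v"
proof (rule ccontr)
  assume "\<not> 0 \<le> bil a v v"
  define \<alpha> where "\<alpha> = - bil a v v"
  define \<beta> where "\<beta> = \<bar>tril b v v v\<bar>"
  have al: "\<alpha> > 0" using \<open>\<not> 0 \<le> bil a v v\<close> \<alpha>_def by simp
  have be: "\<beta> \<ge> 0" using \<beta>_def by simp
  define t where "t = min (e / (2 * (norm v + 1))) (\<alpha> / (2 * (\<beta> + 1)))"
  have d1: "0 < 2 * (norm v + 1)" by (smt (verit) norm_ge_zero)
  have d2: "0 < 2 * (\<beta> + 1)" using be by simp
  have tpos: "t > 0" using e al d1 d2 t_def by simp
  have t1: "t \<le> e / (2 * (norm v + 1))" using t_def by simp
  have t2: "t \<le> \<alpha> / (2 * (\<beta> + 1))" using t_def by simp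
  have "t * (2 * (norm v + 1)) \<le> e" using t1 pos_le_divide_eq[OF d1] by blast
  moreover have "norm v < 2 * (norm v + 1)" by (smt (verit) norm_ge_zero)
  then have "t * norm v < t * (2 * (norm v + 1))" using tpos by (rule mult_strict_left_mono)
  ultimately have "t * norm v < e" by linarith
  then have "t *\<^sub>R v \<in> ball 0 e" using tpos by (simp add: dist_norm)
  then have f: "0 \<le> bil a (t *\<^sub>R v) (t *\<^sub>R v) + tril b (t *\<^sub>R v) (t *\<^sub>R v) (t *\<^sub>R v)" using mn by blast
  have "t * (2 * (\<beta> + 1)) \<le> \<alpha>" using t2 pos_le_divide_eq[OF d2] by blast
  moreover have "t * (2 * (\<beta> + 1)) = 2 * (t * \<beta>) + 2 * t" by (simp add: algebra_simps)
  ultimately have "t * \<beta> \<le> \<alpha> / 2" using tpos by linarith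
  moreover have "t * tril b v v v \<le> t * \<beta>" using tpos \<beta>_def by (simp add: mult_left_mono)
  ultimately have "- \<alpha> + t * tril b v v v < 0" using al by linarith
  then have "t^2 * (- \<alpha> + t * tril b v v v) < 0" using tpos by (simp add: mult_pos_neg)
  moreover have "bil a (t *\<^sub>R v) (t *\<^sub>R v) + tril b (t *\<^sub>R v) (t *\<^sub>R v) (t *\<^sub>R v) = t^2 * (- \<alpha> + t * tril b v v v)"
    unfolding homog2 homog3 \<alpha>_def by (simp add: algebra_simps power2_eq_square power3_eq_cube)
  ultimately show False using f by linarith
qed

lemma small_pt:
  fixes n :: "real^3"
  assumes e: "e > 0"
  defines "\<tau> \<equiv> e / (2 * (norm n + 1))"
  shows "\<tau> > 0" "norm (\<tau> *\<^sub>R n) < e" "norm ((-\<tau>) *\<^sub>R n) < e"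
proof -
  have d1: "0 < 2 * (norm n + 1)" by (smt (verit) norm_ge_zero)
  show tp: "\<tau> > 0" using e d1 \<tau>_def by simp
  have "\<tau> * (2 * (norm n + 1)) = e" unfolding \<tau>_def using d1 by (metis less_irrefl nonzero_eq_divide_eq)
  moreover have "norm n < 2 * (norm n + 1)" by (smt (verit) norm_ge_zero)
  then have "\<tau> * norm n < \<tau> * (2 * (norm n + 1))" using tp by (rule mult_strict_left_mono)
  ultimately have "\<tau> * norm n < e" by linarith
  then show "norm (\<tau> *\<^sub>R n) < e" "norm ((-\<tau>) *\<^sub>R n) < e" using tp by simp_all
qed

lemma P2:
  assumes e: "e > 0" and mn: "\<forall>u\<in>ball 0 e. 0 \<le> bil a u u + tril b u u u"
    and n: "bil a n n = 0"
  shows "tril b n n n = 0"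
proof -
  define \<tau> where "\<tau> = e / (2 * (norm n + 1))"
  note s = small_pt[OF e, of n, folded \<tau>_def]
  have "\<tau> *\<^sub>R n \<in> ball 0 e" "(-\<tau>) *\<^sub>R n \<in> ball 0 e" using s by (simp_all add: dist_norm)
  then have "0 \<le> bil a (\<tau> *\<^sub>R n) (\<tau> *\<^sub>R n) + tril b (\<tau> *\<^sub>R n) (\<tau> *\<^sub>R n) (\<tau> *\<^sub>R n)"
    "0 \<le> bil a ((-\<tau>) *\<^sub>R n) ((-\<tau>) *\<^sub>R n) + tril b ((-\<tau>) *\<^sub>R n) ((-\<tau>) *\<^sub>R n) ((-\<tau>) *\<^sub>R n)"
    using mn by blast+
  then have "0 \<le> \<tau>^3 * tril b n n n" "0 \<le> - (\<tau>^3 * tril b n n n)"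
    unfolding homog2 homog3 n by simp_all
  then show ?thesis using s(1)
    by (metis add.inverse_neutral antisym mult_eq_0_iff neg_0_le_iff_le power_not_zero less_irrefl)
qed

lemma fermat_pt:
  assumes sa: "symA a" and sb: "symB b" and e: "e > 0" and mn: "\<forall>u\<in>ball 0 e. 0 \<le> bil a u u + tril b u u u"
    and x: "norm x < e" and fx: "bil a x x + tril b x x x = 0"
  shows "2 * bil a x h + 3 * tril b x x h = 0"
proof -
  have ev: "eventually (\<lambda>y. bil a x x + tril b x x x \<le> bil a y y + tril b y y y) (at x)"
    unfolding eventually_at
  proof (intro exI[of _ "e - norm x"] conjI ballI impI)
    show "e - norm x > 0" using x by simp
    fix y assume "y \<in> UNIV" "y \<noteq> x \<and> dist y x < e - norm x"
    moreover have "norm y \<le> norm x + norm (y - x)" by (rule norm_triangle_sub)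
    ultimately have "norm y < e" by (simp add: dist_norm)
    then have "y \<in> ball 0 e" by (simp add: dist_norm)
    then show "bil a x x + tril b x x x \<le> bil a y y + tril b y y y" using mn fx by simp
  qed
  from has_derivative_local_min[OF deriv_f[OF sa sb] ev]
  show ?thesis by (metis (mono_tags))
qed

lemma P3:
  assumes sa: "symA a" and sb: "symB b" and e: "e > 0" and mn: "\<forall>u\<in>ball 0 e. 0 \<le> bil a u u + tril b u u u"
    and n: "bil a n n = 0"
  shows "bil a n h = 0 \<and> tril b n n h = 0"
proof -
  define \<tau> where "\<tau> = e / (2 * (norm n + 1))"
  note s = small_pt[OF e, of n, folded \<tau>_def]
  have t3: "tril b n n n = 0" using P2[OF e mn n] .
  have "2 * bil a (\<tau> *\<^sub>R n) h + 3 * tril b (\<tau> *\<^sub>R n) (\<tau> *\<^sub>R n) h = 0"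
    using fermat_pt[OF sa sb e mn s(2)] unfolding homog2 homog3 n t3 by simp
  then have h1: "2 * \<tau> * bil a n h + 3 * \<tau>^2 * tril b n n h = 0"
    unfolding bil_scale1 tril_scale1 tril_scale2 by (simp add: power2_eq_square algebra_simps)
  have "2 * bil a ((-\<tau>) *\<^sub>R n) h + 3 * tril b ((-\<tau>) *\<^sub>R n) ((-\<tau>) *\<^sub>R n) h = 0"
    using fermat_pt[OF sa sb e mn s(3)] unfolding homog2 homog3 n t3 by simp
  then have h2: "- 2 * \<tau> * bil a n h + 3 * \<tau>^2 * tril b n n h = 0"
    unfolding bil_scale1 tril_scale1 tril_scale2 by (simp add: power2_eq_square algebra_simps)
  from h1 h2 have "6 * \<tau>^2 * tril b n n h = 0" by linarith
  then have T: "tril b n n h = 0" using s(1) by simp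
  then have "2 * \<tau> * bil a n h = 0" using h1 by simp
  then show ?thesis using T s(1) by simp
qed

lemma bil_cont: "continuous_on S g \<Longrightarrow> continuous_on S (\<lambda>t. bil a (g t) (g t))"
  unfolding bil_def by (intro continuous_intros)

lemma tril_bound: "\<bar>tril b w w w\<bar> \<le> (\<Sum>i\<in>UNIV. \<Sum>j\<in>UNIV. \<Sum>k\<in>UNIV. \<bar>b i j k\<bar>) * norm w ^ 3"
proof -
  have "\<bar>tril b w w w\<bar> \<le> (\<Sum>i\<in>UNIV. \<Sum>j\<in>UNIV. \<Sum>k\<in>UNIV. \<bar>b i j k * w$i * w$j * w$k\<bar>)"
    unfolding tril_def by (rule order.trans[OF sum_abs], rule sum_mono, rule order.trans[OF sum_abs], rule sum_mono, rule sum_abs)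
  also have "\<dots> \<le> (\<Sum>i\<in>UNIV. \<Sum>j\<in>UNIV. \<Sum>k\<in>UNIV. \<bar>b i j k\<bar> * norm w ^ 3)"
  proof (intro sum_mono)
    fix i j k
    have "\<bar>w$i\<bar> * \<bar>w$j\<bar> * \<bar>w$k\<bar> \<le> norm w * norm w * norm w"
      by (intro mult_mono component_le_norm_cart) auto
    then show "\<bar>b i j k * w$i * w$j * w$k\<bar> \<le> \<bar>b i j k\<bar> * norm w ^ 3"
      by (simp add: abs_mult power3_eq_cube mult.assoc mult_left_mono)
  qed
  also have "\<dots> = (\<Sum>i\<in>UNIV. \<Sum>j\<in>UNIV. \<Sum>k\<in>UNIV. \<bar>b i j k\<bar>) * norm w ^ 3"
    by (simp add: sum_distrib_right)
  finally show ?thesis .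
qed

lemma lower_bound:
  assumes psd: "\<And>v. 0 \<le> bil a v v"
    and ker: "\<And>v w. bil a v v = 0 \<Longrightarrow> bil a v w = 0"
  shows "\<exists>c>0. \<forall>w. (\<forall>v\<in>{n. \<forall>w. bil a n w = 0}. w \<bullet> v = 0) \<longrightarrow> c * (norm w)^2 \<le> bil a w w"
proof -
  define N where "N = {n. \<forall>w. bil a n w = 0}"
  define S where "S = sphere (0::real^3) 1 \<inter> (\<Inter>v\<in>N. {w. v \<bullet> w = 0})"
  have ch: "closed {w. v \<bullet> w = (0::real)}" for v :: "real^3" by (rule closed_hyperplane)
  have cS: "compact S" unfolding S_def
    using ch by (intro compact_Int_closed compact_sphere closed_INT) auto
  have memS: "(1 / norm w) *\<^sub>R w \<in> S" if "w \<noteq> 0" "\<forall>v\<in>N. w \<bullet> v = 0" for w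
    using that unfolding S_def by (auto simp: inner_commute)
  show ?thesis
  proof (cases "S = {}")
    case True
    show ?thesis
    proof (intro exI[of _ 1] conjI allI impI)
      fix w assume "\<forall>v\<in>{n. \<forall>w. bil a n w = 0}. w \<bullet> v = 0"
      then have "w = 0" using memS True N_def by auto
      then show "1 * (norm w)^2 \<le> bil a w w" by simp
    qed simp
  next
    case False
    obtain w0 where w0: "w0 \<in> S" "\<forall>y\<in>S. bil a w0 w0 \<le> bil a y y"
      using continuous_attains_inf[OF cS False bil_cont[OF continuous_on_id]] by auto
    have "bil a w0 w0 > 0"
    proof (rule ccontr)
      assume "\<not> bil a w0 w0 > 0"
      then have "bil a w0 w0 = 0" using psd[of w0] by simp
      then have "w0 \<in> N" using ker N_def by auto
      then have "w0 \<bullet> w0 = 0" using w0(1) S_def by auto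
      then have "w0 = 0" by simp
      then show False using w0(1) S_def by simp
    qed
    then show ?thesis
    proof (intro exI[of _ "bil a w0 w0"] conjI allI impI)
      fix w assume h: "\<forall>v\<in>{n. \<forall>w. bil a n w = 0}. w \<bullet> v = 0"
      show "bil a w0 w0 * (norm w)^2 \<le> bil a w w"
      proof (cases "w = 0")
        case True then show ?thesis by simp
      next
        case False
        then have "bil a w0 w0 \<le> bil a ((1 / norm w) *\<^sub>R w) ((1 / norm w) *\<^sub>R w)"
          using w0(2) memS h N_def by auto
        also have "\<dots> = bil a w w / (norm w)^2" unfolding homog2 by (simp add: power_divide)
        finally show ?thesis using False by (simp add: pos_le_divide_eq)
      qed
    qed
  qed
qed

lemma gap:
  assumes sa: "symA a" and sb: "symB b"
    and psd: "\<And>v. 0 \<le> bil a v v"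
    and ker: "\<And>v w. bil a v v = 0 \<Longrightarrow> bil a v w = 0"
    and t2: "\<And>n h. bil a n n = 0 \<Longrightarrow> tril b n n h = 0"
  shows "\<exists>\<delta>>0. \<forall>u. (\<forall>h. 2 * bil a u h + 3 * tril b u u h = 0) \<longrightarrow> bil a u u = 0 \<or> \<delta> \<le> bil a u u"
proof -
  define N where "N = {n. \<forall>w. bil a n w = 0}"
  have subN: "subspace N" unfolding subspace_def N_def by (auto simp: bil_add1 bil_scale1)
  obtain c where c: "c > 0" "\<And>w. (\<forall>v\<in>N. w \<bullet> v = 0) \<Longrightarrow> c * (norm w)^2 \<le> bil a w w"
    using lower_bound[OF psd ker] N_def by blast
  define K where "K = (\<Sum>i\<in>UNIV. \<Sum>j\<in>UNIV. \<Sum>k\<in>UNIV. \<bar>b i j k\<bar>) + 1"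
  have K0: "(\<Sum>i\<in>UNIV. \<Sum>j\<in>UNIV. \<Sum>k\<in>UNIV. \<bar>b i j k\<bar>) \<ge> 0" by (intro sum_nonneg) auto
  then have Kp: "K > 0" using K_def by simp
  have Kb: "\<bar>tril b w w w\<bar> \<le> K * norm w ^ 3" for w
  proof -
    have "(\<Sum>i\<in>UNIV. \<Sum>j\<in>UNIV. \<Sum>k\<in>UNIV. \<bar>b i j k\<bar>) * norm w ^ 3 \<le> K * norm w ^ 3"
      using K_def by (intro mult_right_mono) auto
    then show ?thesis using tril_bound[of b w] by linarith
  qed
  define r where "r = 2 * c / (3 * K)"
  have r0: "r > 0" using c Kp r_def by simp
  show ?thesis
  proof (intro exI[of _ "c * r^2"] conjI allI impI)
    show "c * r^2 > 0" using c r0 by simp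
    fix u assume hu: "\<forall>h. 2 * bil a u h + 3 * tril b u u h = 0"
    obtain n w where nw: "n \<in> span N" "\<And>x. x \<in> span N \<Longrightarrow> orthogonal w x" "u = n + w"
      using orthogonal_subspace_decomp_exists[of N u] by blast
    have spN: "span N = N" using subN by simp
    have nN: "n \<in> N" using nw(1) spN by simp
    have orth: "\<forall>v\<in>N. w \<bullet> v = 0" using nw(2) spN by (simp add: orthogonal_def)
    have bn: "bil a n h = 0" for h using nN N_def by simp
    have bn2: "bil a h n = 0" for h using bn bil_sym[OF sa] by metis
    have tn: "tril b n n h = 0" for h using t2 bn by blast
    have tn2: "tril b n h n = 0" for h using tn tril_sym23[OF sb] by metis
    have tn3: "tril b h n n = 0" for h using tn2 tril_sym12[OF sb] by metis
    have Auu: "bil a u u = bil a w w" unfolding nw(3) bil_add1 bil_add2 bn bn2 by simp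
    have "2 * bil a u n + 3 * tril b u u n = 0" using hu by blast
    then have "tril b w w n = 0" unfolding nw(3) bil_add1 bil_add2 tril_add1 tril_add2 bn bn2 tn tn2 tn3 by simp
    then have twn: "tril b n w w = 0" "tril b w n w = 0"
      using tril_sym12[OF sb] tril_sym23[OF sb] by metis+
    have "2 * bil a u w + 3 * tril b u u w = 0" using hu by blast
    then have eq: "2 * bil a w w + 3 * tril b w w w = 0"
      unfolding nw(3) bil_add1 bil_add2 tril_add1 tril_add2 bn bn2 tn tn2 tn3 twn by simp
    have cw: "c * (norm w)^2 \<le> bil a w w" using c(2) orth by blast
    show "bil a u u = 0 \<or> c * r^2 \<le> bil a u u"
    proof (cases "w = 0")
      case True then show ?thesis using Auu by simp
    next
      case False
      then have nw0: "norm w > 0" by simp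
      have "bil a w w \<le> 3 / 2 * (K * norm w ^ 3)" using eq Kb[of w] by linarith
      with cw have "c * (norm w)^2 \<le> (3 / 2 * K * norm w) * (norm w)^2"
        by (simp add: power2_eq_square power3_eq_cube algebra_simps)
      then have "c \<le> 3 / 2 * K * norm w" using nw0 by simp
      then have "r \<le> norm w" unfolding r_def using Kp by (simp add: field_simps)
      then have "r^2 \<le> (norm w)^2" using r0 by (intro power_mono) auto
      then have "c * r^2 \<le> c * (norm w)^2" using c(1) by simp
      then show ?thesis using cw Auu by simp
    qed
  qed
qed

lemma path_stay:
  assumes d: "\<delta> > 0" and g: "\<forall>u\<in>V. bil a u u = 0 \<or> \<delta> \<le> bil a u u"
    and p: "path \<gamma>" "path_image \<gamma> \<subseteq> V" "pathstart \<gamma> = 0"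
  shows "bil a (pathfinish \<gamma>) (pathfinish \<gamma>) = 0"
proof (rule ccontr)
  assume ne: "bil a (pathfinish \<gamma>) (pathfinish \<gamma>) \<noteq> 0"
  have "\<gamma> 1 \<in> V" using p(2) unfolding path_image_def by auto
  then have "\<delta> \<le> bil a (\<gamma> 1) (\<gamma> 1)" using g ne unfolding pathfinish_def by auto
  moreover have "bil a (\<gamma> 0) (\<gamma> 0) = 0" using p(3) unfolding pathstart_def by simp
  moreover have "continuous_on {0..1} (\<lambda>t. bil a (\<gamma> t) (\<gamma> t))"
    using p(1) unfolding path_def by (rule bil_cont)
  ultimately obtain t where t: "0 \<le> t" "t \<le> 1" "bil a (\<gamma> t) (\<gamma> t) = \<delta> / 2"
    using IVT'[of "\<lambda>t. bil a (\<gamma> t) (\<gamma> t)" 0 "\<delta>/2" 1] d by auto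
  have "\<gamma> t \<in> V" using p(2) t unfolding path_image_def by auto
  then show False using g t d by fastforce
qed

lemma tperm12: "tril (\<lambda>i j k. B j i k) x x x = tril B x x x"
  unfolding tril_def
  apply (rule trans[OF sum.swap])
  apply (rule sum.cong[OF refl], rule sum.cong[OF refl], rule sum.cong[OF refl])
  by (simp add: mult_ac)

lemma tperm23: "tril (\<lambda>i j k. B i k j) x x x = tril B x x x"
  unfolding tril_def
  apply (rule sum.cong[OF refl])
  apply (rule trans[OF sum.swap])
  apply (rule sum.cong[OF refl], rule sum.cong[OF refl])
  by (simp add: mult_ac)

lemma tril_addT: "tril (\<lambda>i j k. B i j k + C i j k) x y z = tril B x y z + tril C x y z"
  unfolding tril_def by (simp add: algebra_simps sum.distrib)
lemma tril_divT: "tril (\<lambda>i j k. B i j k / c) x y z = tril B x y z / c"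
  unfolding tril_def by (simp add: sum_divide_distrib)

lemma rep_sym:
  assumes "rep 3 p"
  shows "\<exists>c g a b. symA a \<and> symB b \<and> (\<forall>x. p x = c + lin g x + bil a x x + tril b x x x)"
proof -
  obtain c g a b where h: "\<forall>x. p x = c + lin g x + bil a x x + tril b x x x"
    using assms unfolding rep_def by blast
  define a' where "a' = (\<lambda>i j. (a i j + a j i) / 2)"
  define b' where "b' = (\<lambda>i j k. (b i j k + b j i k + b i k j + b k j i + b j k i + b k i j) / 6)"
  have sa: "symA a'" unfolding symA_def a'_def by (simp add: algebra_simps)
  have sb: "symB b'" unfolding symB_def b'_def by (simp add: algebra_simps)
  have ea: "bil a' x x = bil a x x" for x unfolding bil_def a'_def sum_3 by (simp add: algebra_simps)
  have eb: "tril b' x x x = tril b x x x" for x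
  proof -
    have "tril b' x x x = (tril b x x x + tril (\<lambda>i j k. b j i k) x x x + tril (\<lambda>i j k. b i k j) x x x
       + tril (\<lambda>i j k. b k j i) x x x + tril (\<lambda>i j k. b j k i) x x x + tril (\<lambda>i j k. b k i j) x x x) / 6"
      unfolding b'_def by (simp only: tril_addT tril_divT)
    also have "\<dots> = tril b x x x"
      using tperm12[of b x] tperm23[of b x] tperm12[of "\<lambda>i j k. b k i j" x] tperm23[of "\<lambda>i j k. b j i k" x]
        tperm12[of "\<lambda>i j k. b i k j" x] by simp
    finally show ?thesis .
  qed
  show ?thesis using sa sb h ea eb by metis
qed

lemma grad_char:
  assumes sa: "symA a" and sb: "symB b" and p: "\<forall>x. p x = c + lin g x + bil a x x + tril b x x x"
  shows "x \<in> grad_zero_set p \<longleftrightarrow> (\<forall>h. lin g h + 2 * bil a x h + 3 * tril b x x h = 0)"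
proof -
  have pe: "p = (\<lambda>u. c + lin g u + bil a u u + tril b u u u)" using p by auto
  have d: "(p has_derivative (\<lambda>h. lin g h + 2 * bil a x h + 3 * tril b x x h)) (at x)"
    unfolding pe by (rule deriv_form[OF sa sb])
  show ?thesis
  proof
    assume "x \<in> grad_zero_set p"
    then have "(p has_derivative (\<lambda>h. 0)) (at x)" unfolding grad_zero_set_def by simp
    from has_derivative_unique[OF d this] show "\<forall>h. lin g h + 2 * bil a x h + 3 * tril b x x h = 0"
      by (metis (mono_tags))
  next
    assume "\<forall>h. lin g h + 2 * bil a x h + 3 * tril b x x h = 0"
    then have "(\<lambda>h. lin g h + 2 * bil a x h + 3 * tril b x x h) = (\<lambda>h. 0)" by auto
    with d show "x \<in> grad_zero_set p" unfolding grad_zero_set_def by simp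
  qed
qed

lemma bil_shift:
  "bil (\<lambda>i j. a i j + 3 * (\<Sum>k\<in>UNIV. b k i j * m$k)) x y = bil a x y + 3 * tril b m x y"
proof -
  have 1: "bil (\<lambda>i j. a i j + 3 * (\<Sum>k\<in>UNIV. b k i j * m$k)) x y
      = bil a x y + 3 * (\<Sum>i\<in>UNIV. \<Sum>j\<in>UNIV. \<Sum>k\<in>UNIV. b k i j * m$k * x$i * y$j)"
    unfolding bil_def by (simp add: algebra_simps sum.distrib sum_distrib_left sum_distrib_right)
  have "(\<Sum>i\<in>UNIV. \<Sum>j\<in>UNIV. \<Sum>k\<in>UNIV. b k i j * m$k * x$i * y$j)
      = (\<Sum>i\<in>UNIV. \<Sum>k\<in>UNIV. \<Sum>j\<in>UNIV. b k i j * m$k * x$i * y$j)"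
    by (rule sum.cong[OF refl], rule sum.swap)
  also have "\<dots> = (\<Sum>k\<in>UNIV. \<Sum>i\<in>UNIV. \<Sum>j\<in>UNIV. b k i j * m$k * x$i * y$j)"
    by (rule sum.swap)
  also have "\<dots> = tril b m x y" unfolding tril_def by simp
  finally show ?thesis using 1 by simp
qed

lemma symA_shift:
  assumes "symA a" "symB b" shows "symA (\<lambda>i j. a i j + 3 * (\<Sum>k\<in>UNIV. b k i j * m$k))"
proof -
  have h1: "a i j = a j i" for i j using assms(1) unfolding symA_def by blast
  have h2: "b k i j = b k j i" for i j k using assms(2) unfolding symB_def by blast
  show ?thesis unfolding symA_def using h1 h2 by simp
qed

lemma bil_neg: "bil (\<lambda>i j. - a i j) x y = - bil a x y"
  unfolding bil_def by (simp add: sum_negf)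
lemma tril_neg: "tril (\<lambda>i j k. - b i j k) x y z = - tril b x y z"
  unfolding tril_def by (simp add: sum_negf)

lemma core:
  assumes sa: "symA a" and sb: "symB b" and e: "e > 0"
    and mn: "\<forall>u\<in>ball 0 e. 0 \<le> bil a u u + tril b u u u"
  shows "(\<forall>n. (\<forall>w. bil a n w = 0) \<longrightarrow> (\<forall>h. 2 * bil a n h + 3 * tril b n n h = 0)) \<and>
    (\<forall>\<gamma>. path \<gamma> \<and> path_image \<gamma> \<subseteq> {u. \<forall>h. 2 * bil a u h + 3 * tril b u u h = 0} \<and> pathstart \<gamma> = 0
        \<longrightarrow> (\<forall>w. bil a (pathfinish \<gamma>) w = 0))"
proof -
  have psd: "\<And>v. 0 \<le> bil a v v" using P1[OF e mn] .
  have ker: "\<And>v w. bil a v v = 0 \<Longrightarrow> bil a v w = 0" using P3[OF sa sb e mn] by blast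
  have t2: "\<And>n h. bil a n n = 0 \<Longrightarrow> tril b n n h = 0" using P3[OF sa sb e mn] by blast
  obtain \<delta> where d: "\<delta> > 0" "\<forall>u. (\<forall>h. 2 * bil a u h + 3 * tril b u u h = 0) \<longrightarrow> bil a u u = 0 \<or> \<delta> \<le> bil a u u"
    using gap[OF sa sb psd ker t2] by blast
  show ?thesis
  proof (intro conjI allI impI)
    fix n h assume "\<forall>w. bil a n w = 0"
    then show "2 * bil a n h + 3 * tril b n n h = 0" using t2 by simp
  next
    fix \<gamma> w assume h: "path \<gamma> \<and> path_image \<gamma> \<subseteq> {u. \<forall>h. 2 * bil a u h + 3 * tril b u u h = 0} \<and> pathstart \<gamma> = 0"
    have "bil a (pathfinish \<gamma>) (pathfinish \<gamma>) = 0"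
      using path_stay[OF d(1), of "{u. \<forall>h. 2 * bil a u h + 3 * tril b u u h = 0}" a \<gamma>] d(2) h by blast
    then show "bil a (pathfinish \<gamma>) w = 0" using ker by blast
  qed
qed

lemma core2:
  assumes sa: "symA a" and sb: "symB b" and e: "e > 0"
    and mn: "(\<forall>u\<in>ball 0 e. 0 \<le> bil a u u + tril b u u u) \<or> (\<forall>u\<in>ball 0 e. bil a u u + tril b u u u \<le> 0)"
  shows "(\<forall>n. (\<forall>w. bil a n w = 0) \<longrightarrow> (\<forall>h. 2 * bil a n h + 3 * tril b n n h = 0)) \<and>
    (\<forall>\<gamma>. path \<gamma> \<and> path_image \<gamma> \<subseteq> {u. \<forall>h. 2 * bil a u h + 3 * tril b u u h = 0} \<and> pathstart \<gamma> = 0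
        \<longrightarrow> (\<forall>w. bil a (pathfinish \<gamma>) w = 0))"
proof (cases "\<forall>u\<in>ball 0 e. 0 \<le> bil a u u + tril b u u u")
  case True then show ?thesis using core[OF sa sb e] by blast
next
  case False
  then have mx: "\<forall>u\<in>ball 0 e. 0 \<le> bil (\<lambda>i j. - a i j) u u + tril (\<lambda>i j k. - b i j k) u u u"
    using mn unfolding bil_neg tril_neg by auto
  have sa': "symA (\<lambda>i j. - a i j)" using sa unfolding symA_def by simp
  have sb': "symB (\<lambda>i j k. - b i j k)" using sb unfolding symB_def by simp
  have ng: "\<And>A T::real. (2 * - A + 3 * - T = 0) = (2 * A + 3 * T = 0)" by linarith
  have eqs: "{u. \<forall>h. 2 * bil (\<lambda>i j. - a i j) u h + 3 * tril (\<lambda>i j k. - b i j k) u u h = 0}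
     = {u. \<forall>h. 2 * bil a u h + 3 * tril b u u h = 0}"
    by (simp only: bil_neg tril_neg ng)
  show ?thesis using core[OF sa' sb' e mx] unfolding eqs unfolding bil_neg tril_neg by auto
qed

theorem lemma4p2:
  fixes p :: "real^3 \<Rightarrow> real" and m :: "real^3" and C :: "(real^3) set"
  assumes "is_poly3_deg_le3 p"
    and "m \<in> grad_zero_set p"
    and "local_extremum p m"
    and "C = path_component_set (grad_zero_set p) m"
  shows "affine hull C \<subseteq> grad_zero_set p"
proof -
  obtain c g a b where sa: "symA a" and sb: "symB b"
    and pr: "\<forall>x. p x = c + lin g x + bil a x x + tril b x x x"
    using rep_sym[OF poly_rep[OF assms(1)]] by blast
  define V where "V = grad_zero_set p"
  have hV: "x \<in> V \<longleftrightarrow> (\<forall>h. lin g h + 2 * bil a x h + 3 * tril b x x h = 0)" for x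
    unfolding V_def by (rule grad_char[OF sa sb pr])
  have Dm: "lin g h + 2 * bil a m h + 3 * tril b m m h = 0" for h
    using assms(2) hV V_def by blast
  define a' where "a' = (\<lambda>i j. a i j + 3 * (\<Sum>k\<in>UNIV. b k i j * m$k))"
  have sa': "symA a'" unfolding a'_def by (rule symA_shift[OF sa sb])
  have bs: "bil a' x y = bil a x y + 3 * tril b m x y" for x y unfolding a'_def by (rule bil_shift)
  have s12: "tril b x y z = tril b y x z" for x y z by (rule tril_sym12[OF sb])
  have s23: "tril b x y z = tril b x z y" for x y z by (rule tril_sym23[OF sb])
  have bsy: "bil a x y = bil a y x" for x y by (rule bil_sym[OF sa])
  have shiftV: "m + u \<in> V \<longleftrightarrow> (\<forall>h. 2 * bil a' u h + 3 * tril b u u h = 0)" for u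
  proof -
    have "lin g h + 2 * bil a (m + u) h + 3 * tril b (m + u) (m + u) h
      = (lin g h + 2 * bil a m h + 3 * tril b m m h) + (2 * bil a' u h + 3 * tril b u u h)" for h
      unfolding bs bil_add1 tril_add1 tril_add2 using s12[of u m h] by (simp add: algebra_simps)
    then show ?thesis using hV Dm by simp
  qed
  have shiftf: "p (m + u) = p m + (bil a' u u + tril b u u u)" for u
  proof -
    have e1: "tril b m u m = tril b m m u" "tril b u m m = tril b m m u" "tril b u m u = tril b m u u"
      "tril b u u m = tril b m u u"
      using s12 s23 by metis+
    have "p (m + u) = c + lin g m + bil a m m + tril b m m m
        + (lin g u + 2 * bil a m u + 3 * tril b m m u) + (bil a u u + 3 * tril b m u u + tril b u u u)"
      unfolding pr[rule_format] lin_add bil_add1 bil_add2 tril_add1 tril_add2 tril_add3 e1 using bsy[of u m]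
      by (simp add: algebra_simps)
    then show ?thesis using Dm[of u] pr bs by simp
  qed
  obtain e where e: "e > 0" and ext: "(\<forall>v\<in>ball m e. p v \<le> p m) \<or> (\<forall>v\<in>ball m e. p m \<le> p v)"
    using assms(3) unfolding local_extremum_def by blast
  have ball_sh: "u \<in> ball 0 e \<Longrightarrow> m + u \<in> ball m e" for u by (simp add: dist_norm)
  have mn: "(\<forall>u\<in>ball 0 e. 0 \<le> bil a' u u + tril b u u u) \<or> (\<forall>u\<in>ball 0 e. bil a' u u + tril b u u u \<le> 0)"
    using ext ball_sh shiftf by (smt (verit))
  note cr = core2[OF sa' sb e mn]
  define N where "N = {n. \<forall>w. bil a' n w = 0}"
  define M where "M = {x. x - m \<in> N}"
  have MV: "M \<subseteq> grad_zero_set p"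
  proof
    fix x assume "x \<in> M"
    then have "\<forall>h. 2 * bil a' (x - m) h + 3 * tril b (x - m) (x - m) h = 0" using cr M_def N_def by blast
    then have "m + (x - m) \<in> V" using shiftV by blast
    then show "x \<in> grad_zero_set p" using V_def by simp
  qed
  have affM: "affine M" unfolding affine_def
  proof (intro ballI allI impI)
    fix x y u v assume h: "x \<in> M" "y \<in> M" "u + v = (1::real)"
    have "u *\<^sub>R x + v *\<^sub>R y - m = u *\<^sub>R (x - m) + v *\<^sub>R (y - m)"
      using h(3) by (simp add: algebra_simps) (metis add_diff_cancel_left' scaleR_add_left scaleR_one)
    then show "u *\<^sub>R x + v *\<^sub>R y \<in> M" using h unfolding M_def N_def by (simp add: bil_add1 bil_scale1)
  qed
  have CM: "C \<subseteq> M"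
  proof
    fix x assume "x \<in> C"
    then have "\<exists>\<gamma>. path \<gamma> \<and> path_image \<gamma> \<subseteq> V \<and> pathstart \<gamma> = m \<and> pathfinish \<gamma> = x"
      using assms(4) V_def by (simp add: path_component_set)
    then obtain \<gamma> where g: "path \<gamma>" "path_image \<gamma> \<subseteq> V" "pathstart \<gamma> = m" "pathfinish \<gamma> = x"
      by blast
    define \<gamma>' where "\<gamma>' = (\<lambda>t. \<gamma> t - m)"
    have p1: "path \<gamma>'" using g(1) unfolding path_def \<gamma>'_def by (intro continuous_intros)
    have p2: "path_image \<gamma>' \<subseteq> {u. \<forall>h. 2 * bil a' u h + 3 * tril b u u h = 0}"
    proof
      fix z assume "z \<in> path_image \<gamma>'"
      then obtain t where t: "t \<in> {0..1}" "z = \<gamma> t - m" unfolding path_image_def \<gamma>'_def by auto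
      then have "\<gamma> t \<in> V" using g(2) unfolding path_image_def by auto
      then have "m + z \<in> V" using t by simp
      then show "z \<in> {u. \<forall>h. 2 * bil a' u h + 3 * tril b u u h = 0}" using shiftV by blast
    qed
    have p3: "pathstart \<gamma>' = 0" using g(3) unfolding pathstart_def \<gamma>'_def by simp
    have pf: "pathfinish \<gamma>' = x - m" using g(4) unfolding pathfinish_def \<gamma>'_def by simp
    have "\<forall>w. bil a' (pathfinish \<gamma>') w = 0"
      using cr[THEN conjunct2, rule_format, OF conjI[OF p1 conjI[OF p2 p3]]] by blast
    then have "\<forall>w. bil a' (x - m) w = 0" unfolding pf .
    then show "x \<in> M" unfolding M_def N_def by simp
  qed
  have "affine hull C \<subseteq> M" using hull_minimal[of C M affine] CM affM by blast
  then show ?thesis using MV by blast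
qed

end
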